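(* Let $m\ge 2$ be fixed and assume (A1)–(A4). Let $X_{\mathbf 1}$ be the number of coupons collected by all $m$ collectors. Then $$\operatorname{Var}(X_{\mathbf 1})\asymp \frac{(n-a_1)(n-a_2)}{n}\prod_{i=1}^m\frac{a_i}{n}=\Big(1-\frac{a_1}{n}\Big)\Big(1-\frac{a_2}{n}\Big)\mathbb{E}(X_{\mathbf 1}).$$
   Context: Coupon collector model: there are $n$ distinct coupons and $m$ collectors acting independently; collector $i$ collects a uniformly random subset of exactly $a_i$ distinct coupons, independently of the others. We consider a sequence of such models indexed by $n$, with $m$ fixed and $a_i=a_i(n)$, under the asymptotic assumptions: (A1) $n\to\infty$; (A2) $a_i\to\infty$ and $n-a_i\to\infty$ for each $i=1,\dots,m$; (A3) $1\le a_1\le a_2\le\cdots\le a_m\le n-1$; (A4) $a_i/n\to\alpha_i\in[0,1]$ for each $i$. For positive sequences, $x_n\asymp y_n$ means that both $\limsup x_n/y_n$ and $\liminf x_n/y_n$ are finite and strictly positive. *)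

theory Defs
  imports "HOL-Probability.Probability"
begin

definition coupon_model :: "nat \<Rightarrow> nat \<Rightarrow> (nat \<Rightarrow> nat) \<Rightarrow> (nat \<Rightarrow> nat set) pmf" where
  "coupon_model n m a =
     Pi_pmf {1..m} {} (\<lambda>i. pmf_of_set {S. S \<subseteq> {..<n} \<and> card S = a i})"

definition X_all :: "nat \<Rightarrow> (nat \<Rightarrow> nat set) \<Rightarrow> real" where
  "X_all m f = real (card (\<Inter>i\<in>{1..m}. f i))"

definition asymp_order :: "(nat \<Rightarrow> real) \<Rightarrow> (nat \<Rightarrow> real) \<Rightarrow> bool" where
  "asymp_order x y \<longleftrightarrow>
     0 < limsup (\<lambda>k. ereal (x k / y k)) \<and> limsup (\<lambda>k. ereal (x k / y k)) < \<infinity> \<and>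
     0 < liminf (\<lambda>k. ereal (x k / y k)) \<and> liminf (\<lambda>k. ereal (x k / y k)) < \<infinity>"

end

theory Submission
  imports Defs
begin


lemma card_sub_sup:
  assumes "finite A" "B \<subseteq> A" "card B \<le> k"
  shows "card {S. S \<subseteq> A \<and> card S = k \<and> B \<subseteq> S} = (card A - card B) choose (k - card B)"
proof -
  have fB: "finite B" using assms finite_subset by blast
  have eq: "{S. S \<subseteq> A \<and> card S = k \<and> B \<subseteq> S} = (\<lambda>T. T \<union> B) ` {T. T \<subseteq> A - B \<and> card T = k - card B}"
  proof (intro equalityI subsetI)
    fix S assume "S \<in> {S. S \<subseteq> A \<and> card S = k \<and> B \<subseteq> S}"
    hence S: "S \<subseteq> A" "card S = k" "B \<subseteq> S" by auto
    have fS: "finite S" using S(1) assms(1) finite_subset by blast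
    have "card (S - B) = k - card B" using S fS fB by (simp add: card_Diff_subset)
    moreover have "S = (S - B) \<union> B" using S by auto
    ultimately show "S \<in> (\<lambda>T. T \<union> B) ` {T. T \<subseteq> A - B \<and> card T = k - card B}"
      using S by (intro image_eqI[of _ _ "S - B"]) auto
  next
    fix S assume "S \<in> (\<lambda>T. T \<union> B) ` {T. T \<subseteq> A - B \<and> card T = k - card B}"
    then obtain T where T: "T \<subseteq> A - B" "card T = k - card B" "S = T \<union> B" by auto
    have fT: "finite T" using T(1) assms(1) finite_subset by blast
    have "T \<inter> B = {}" using T by auto
    hence "card S = card T + card B" using T fT fB by (simp add: card_Un_disjoint)
    thus "S \<in> {S. S \<subseteq> A \<and> card S = k \<and> B \<subseteq> S}" using T assms by auto
  qed
  have inj: "inj_on (\<lambda>T. T \<union> B) {T. T \<subseteq> A - B \<and> card T = k - card B}"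
    by (rule inj_onI) blast
  have "card {S. S \<subseteq> A \<and> card S = k \<and> B \<subseteq> S} = card {T. T \<subseteq> A - B \<and> card T = k - card B}"
    unfolding eq using inj by (rule card_image)
  also have "\<dots> = card (A - B) choose (k - card B)" using assms by (intro n_subsets) auto
  also have "card (A - B) = card A - card B" using assms fB by (simp add: card_Diff_subset)
  finally show ?thesis .
qed

lemma sum_ind_card: "finite U \<Longrightarrow> (\<Sum>S\<in>U. if P S then 1 else 0 :: real) = real (card {S\<in>U. P S})"
proof -
  assume "finite U"
  moreover have "U \<inter> Collect P = {S\<in>U. P S}" by auto
  ultimately show ?thesis by (simp add: sum.If_cases)
qed

definition U :: "nat \<Rightarrow> nat \<Rightarrow> nat set set" where
  "U n a = {S. S \<subseteq> {..<n} \<and> card S = a}"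

lemma U_finite: "finite (U n a)"
  unfolding U_def by (rule finite_subset[of _ "Pow {..<n}"]) auto

lemma U_card: "card (U n a) = n choose a"
  unfolding U_def using n_subsets[of "{..<n}" a] by simp

lemma U_ne: "a \<le> n \<Longrightarrow> U n a \<noteq> {}"
proof -
  assume "a \<le> n"
  hence "card (U n a) > 0" using U_card by simp
  thus ?thesis by auto
qed

lemma div_helper:
  fixes x y u v :: real
  assumes "u * y = v * x" "y \<noteq> 0" "v \<noteq> 0"
  shows "x / y = u / v"
  using assms by (simp add: frac_eq_eq mult.commute)

lemma exp1:
  assumes "j < n" "1 \<le> a" "a \<le> n"
  shows "measure_pmf.expectation (pmf_of_set (U n a)) (\<lambda>S. if j \<in> S then 1 else 0) = real a / real n"
proof -
  have "{S \<in> U n a. j \<in> S} = {S. S \<subseteq> {..<n} \<and> card S = a \<and> {j} \<subseteq> S}" by (auto simp: U_def)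
  hence c: "card {S \<in> U n a. j \<in> S} = (n - 1) choose (a - 1)"
    using card_sub_sup[of "{..<n}" "{j}" a] assms by simp
  have e0: "a * (n choose a) = n * ((n - 1) choose (a - 1))"
    using times_binomial_minus1_eq[of a n] assms by linarith
  have "real a * real (n choose a) = real n * real ((n - 1) choose (a - 1))"
    unfolding of_nat_mult[symmetric] e0 ..
  moreover have "(n choose a) > 0" using assms by simp
  moreover have "n > 0" using assms by simp
  ultimately have r: "real ((n - 1) choose (a - 1)) / real (n choose a) = real a / real n"
    by (intro div_helper) auto
  have "measure_pmf.expectation (pmf_of_set (U n a)) (\<lambda>S. if j \<in> S then 1 else 0)
      = real (card {S \<in> U n a. j \<in> S}) / real (card (U n a))"
    using assms by (simp only: integral_pmf_of_set[OF U_ne U_finite] sum_ind_card[OF U_finite])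
  also have "\<dots> = real a / real n" unfolding c U_card by (rule r)
  finally show ?thesis .
qed

lemma exp2:
  assumes "j < n" "l < n" "j \<noteq> l" "1 \<le> a" "a \<le> n"
  shows "measure_pmf.expectation (pmf_of_set (U n a)) (\<lambda>S. if j \<in> S \<and> l \<in> S then 1 else 0)
     = real a * (real a - 1) / (real n * (real n - 1))"
proof -
  have n2: "n \<ge> 2" using assms by auto
  have e: "{S \<in> U n a. j \<in> S \<and> l \<in> S} = {S. S \<subseteq> {..<n} \<and> card S = a \<and> {j,l} \<subseteq> S}" by (auto simp: U_def)
  show ?thesis
  proof (cases "a = 1")
    case True
    have "{S \<in> U n a. j \<in> S \<and> l \<in> S} = {}"
    proof (rule ccontr)
      assume "{S \<in> U n a. j \<in> S \<and> l \<in> S} \<noteq> {}"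
      then obtain S where S: "S \<in> U n a" "j \<in> S" "l \<in> S" by auto
      have "finite S" using S(1) by (auto simp: U_def finite_subset)
      hence "card {j,l} \<le> card S" using S by (intro card_mono) auto
      thus False using S(1) True assms(3) by (auto simp: U_def)
    qed
    thus ?thesis using True assms U_finite U_ne
      by (simp add: integral_pmf_of_set sum_ind_card)
  next
    case False
    hence a2: "a \<ge> 2" using assms by auto
    have c: "card {S \<in> U n a. j \<in> S \<and> l \<in> S} = (n - 2) choose (a - 2)"
      unfolding e using card_sub_sup[of "{..<n}" "{j,l}" a] assms a2 by (simp add: numeral_2_eq_2)
    have h1: "a * (n choose a) = n * ((n - 1) choose (a - 1))"
      using times_binomial_minus1_eq[of a n] assms by simp
    have h2: "(a - 1) * ((n - 1) choose (a - 1)) = (n - 1) * ((n - 1 - 1) choose (a - 1 - 1))"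
      using times_binomial_minus1_eq[of "a-1" "n-1"] a2 by simp
    have "real a * (real a - 1) * real (n choose a) = real n * (real n - 1) * real ((n - 2) choose (a - 2))"
    proof -
      have "real a * real (n choose a) = real n * real ((n - 1) choose (a - 1))"
        using h1 by (metis of_nat_mult)
      moreover have "(real a - 1) * real ((n - 1) choose (a - 1)) = (real n - 1) * real ((n - 2) choose (a - 2))"
      proof -
        have "real ((a - 1) * ((n - 1) choose (a - 1))) = real ((n - 1) * ((n - 2) choose (a - 2)))"
          using h2 by (simp add: diff_diff_left numeral_2_eq_2)
        moreover have "real (a - 1) = real a - 1" "real (n - 1) = real n - 1" using a2 n2 by auto
        ultimately show ?thesis by (simp only: of_nat_mult)
      qed
      ultimately show ?thesis by (metis mult.assoc mult.commute)
    qed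
    moreover have "(n choose a) > 0" using assms by simp
    moreover have "real n - 1 > 0" using n2 by simp
    ultimately have r: "real ((n - 2) choose (a - 2)) / real (n choose a) = real a * (real a - 1) / (real n * (real n - 1))"
      by (intro div_helper) auto
    have "measure_pmf.expectation (pmf_of_set (U n a)) (\<lambda>S. if j \<in> S \<and> l \<in> S then 1 else 0)
        = real (card {S \<in> U n a. j \<in> S \<and> l \<in> S}) / real (card (U n a))"
      using assms by (simp only: integral_pmf_of_set[OF U_ne U_finite] sum_ind_card[OF U_finite])
    also have "\<dots> = real a * (real a - 1) / (real n * (real n - 1))" unfolding c U_card by (rule r)
    finally show ?thesis .
  qed
qed




lemma prod_01:
  fixes z :: "nat \<Rightarrow> real"
  assumes "\<And>i. i \<in> A \<Longrightarrow> 0 \<le> z i \<and> z i \<le> 1"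
  shows "0 \<le> prod z A \<and> prod z A \<le> 1"
  using assms by (auto intro: prod_nonneg prod_le_1)

lemma prod_le_factor:
  fixes z :: "nat \<Rightarrow> real"
  assumes "finite A" "j \<in> A" "\<And>i. i \<in> A \<Longrightarrow> 0 \<le> z i \<and> z i \<le> 1"
  shows "prod z A \<le> z j"
proof -
  have "prod z A = z j * prod z (A - {j})" using assms by (simp add: prod.remove)
  moreover have "prod z (A - {j}) \<le> 1" "0 \<le> z j" using assms prod_01[of "A - {j}" z] by auto
  ultimately show ?thesis by (simp add: mult_left_le)
qed

lemma one_minus_prod:
  fixes z :: "nat \<Rightarrow> real"
  assumes "finite A" "\<And>i. i \<in> A \<Longrightarrow> 0 \<le> z i \<and> z i \<le> 1"
  shows "1 - prod z A \<le> (\<Sum>i\<in>A. 1 - z i)"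
  using assms
proof (induction A rule: finite_induct)
  case empty then show ?case by simp
next
  case (insert x F)
  have h: "1 - prod z F \<le> (\<Sum>i\<in>F. 1 - z i)" using insert by auto
  have p: "0 \<le> prod z F \<and> prod z F \<le> 1" using insert prod_01[of F z] by auto
  have zx: "0 \<le> z x" "z x \<le> 1" using insert by auto
  have "1 - z x * prod z F = (1 - z x) + z x * (1 - prod z F)" by algebra
  also have "z x * (1 - prod z F) \<le> 1 - prod z F" using zx p by (simp add: mult_left_le_one_le)
  finally show ?case using insert h by simp
qed

lemma S_step:
  fixes n :: real and p y :: "nat \<Rightarrow> real"
  assumes n1: "n > 1" and py: "\<And>i. (n - 1) * y i = n * p i - 1"
    and y01: "\<And>i. 0 \<le> y i \<and> y i \<le> 1"
  shows "(1 - p 1) * (1 - (\<Prod>i\<in>{2..Suc k}. p i)) \<le> 1 - n * (\<Prod>i\<in>{1..Suc k}. p i) + (n - 1) * (\<Prod>i\<in>{1..Suc k}. y i)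
    \<and> 1 - n * (\<Prod>i\<in>{1..Suc k}. p i) + (n - 1) * (\<Prod>i\<in>{1..Suc k}. y i) \<le> (1 - (\<Prod>i\<in>{1..Suc k}. y i)) * (1 - (\<Prod>i\<in>{2..Suc k}. p i))"
proof (induction k)
  case 0
  have "1 - n * p 1 + (n - 1) * y 1 = 0" using py[of 1] by simp
  thus ?case by simp
next
  case (Suc k)
  have p01: "0 \<le> p i \<and> p i \<le> 1" for i
  proof -
    have "n * p i = (n - 1) * y i + 1" using py[of i] by simp
    moreover have "0 \<le> (n - 1) * y i" "(n - 1) * y i \<le> n - 1" using y01[of i] n1 by (auto simp: mult_left_le)
    ultimately have "0 \<le> n * p i" "n * p i \<le> n" by auto
    thus ?thesis using n1 by (auto simp: zero_le_mult_iff mult_le_cancel_left1)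
  qed
  define P where "P = (\<Prod>i\<in>{1..Suc k}. p i)"
  define Q where "Q = (\<Prod>i\<in>{1..Suc k}. y i)"
  define R where "R = (\<Prod>i\<in>{2..Suc k}. p i)"
  define q where "q = p (Suc (Suc k))"
  define z where "z = y (Suc (Suc k))"
  have P': "(\<Prod>i\<in>{1..Suc (Suc k)}. p i) = q * P" unfolding P_def q_def by (simp add: prod.nat_ivl_Suc')
  have Q': "(\<Prod>i\<in>{1..Suc (Suc k)}. y i) = z * Q" unfolding Q_def z_def by (simp add: prod.nat_ivl_Suc')
  have R': "(\<Prod>i\<in>{2..Suc (Suc k)}. p i) = q * R" unfolding R_def q_def by (simp add: prod.nat_ivl_Suc')
  have IH: "(1 - p 1) * (1 - R) \<le> 1 - n * P + (n - 1) * Q" "1 - n * P + (n - 1) * Q \<le> (1 - Q) * (1 - R)"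
    using Suc unfolding P_def Q_def R_def by auto
  have q01: "0 \<le> q" "q \<le> 1" using p01 unfolding q_def by auto
  have z01: "0 \<le> z" "z \<le> 1" using y01 unfolding z_def by auto
  have Q01: "0 \<le> Q" "Q \<le> 1" using prod_01[of "{1..Suc k}" y] y01 unfolding Q_def by auto
  have R01: "0 \<le> R" "R \<le> 1" using prod_01[of "{2..Suc k}" p] p01 unfolding R_def by auto
  have Qy1: "Q \<le> y 1" unfolding Q_def using y01 by (intro prod_le_factor) auto
  have y1p1: "y 1 \<le> p 1"
  proof -
    have "(n - 1) * (y 1 - p 1) = p 1 - 1" using py[of 1] by (simp add: algebra_simps)
    hence "(n - 1) * (y 1 - p 1) \<le> 0" using p01[of 1] by simp
    thus ?thesis using n1 by (simp add: mult_le_0_iff)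
  qed
  have zq: "(n - 1) * z = n * q - 1" unfolding z_def q_def by (rule py)
  have key: "1 - n * (q * P) + (n - 1) * (z * Q) = q * (1 - n * P + (n - 1) * Q) + (1 - q) * (1 - Q)"
  proof -
    have "(n - 1) * (z * Q) = (n * q - 1) * Q" using zq by (metis mult.assoc)
    thus ?thesis by (simp add: algebra_simps)
  qed
  have lo: "(1 - p 1) * (1 - q * R) \<le> q * (1 - n * P + (n - 1) * Q) + (1 - q) * (1 - Q)"
  proof -
    have "q * ((1 - p 1) * (1 - R)) \<le> q * (1 - n * P + (n - 1) * Q)" by (intro mult_left_mono IH(1) q01(1)) 
    moreover have "(1 - q) * (1 - p 1) \<le> (1 - q) * (1 - Q)" using Qy1 y1p1 q01 by (intro mult_left_mono) auto
    moreover have "(1 - p 1) * (1 - q * R) = q * ((1 - p 1) * (1 - R)) + (1 - q) * (1 - p 1)" by (simp add: algebra_simps)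
    ultimately show ?thesis by linarith
  qed
  have hi: "q * (1 - n * P + (n - 1) * Q) + (1 - q) * (1 - Q) \<le> (1 - z * Q) * (1 - q * R)"
  proof -
    have "q * (1 - n * P + (n - 1) * Q) \<le> q * ((1 - Q) * (1 - R))" by (intro mult_left_mono IH(2) q01(1))
    moreover have "q * ((1 - Q) * (1 - R)) + (1 - q) * (1 - Q) = (1 - Q) * (1 - q * R)" by (simp add: algebra_simps)
    moreover have "(1 - Q) * (1 - q * R) \<le> (1 - z * Q) * (1 - q * R)"
    proof (rule mult_right_mono)
      show "1 - Q \<le> 1 - z * Q" using z01 Q01 by (simp add: mult_left_le_one_le)
      show "0 \<le> 1 - q * R" using q01 R01 by (simp add: mult_le_one)
    qed
    ultimately show ?thesis by linarith
  qed
  show ?case unfolding P' Q' R' using key lo hi by simp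
qed




lemma S_final:
  fixes n :: real and p y :: "nat \<Rightarrow> real" and m :: nat
  assumes n2: "n \<ge> 2" and py: "\<And>i. (n - 1) * y i = n * p i - 1"
    and y01: "\<And>i. 0 \<le> y i \<and> y i \<le> 1" and m2: "m \<ge> 2"
    and o1: "\<And>i. i \<in> {1..m} \<Longrightarrow> p 1 \<le> p i"
    and o2: "\<And>i. i \<in> {2..m} \<Longrightarrow> p 2 \<le> p i"
  shows "(1 - p 1) * (1 - p 2) \<le> 1 - n * (\<Prod>i\<in>{1..m}. p i) + (n - 1) * (\<Prod>i\<in>{1..m}. y i)
    \<and> 1 - n * (\<Prod>i\<in>{1..m}. p i) + (n - 1) * (\<Prod>i\<in>{1..m}. y i) \<le> 2 * real m ^ 2 * ((1 - p 1) * (1 - p 2))"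
proof -
  have p01: "0 \<le> p i \<and> p i \<le> 1" for i
  proof -
    have "n * p i = (n - 1) * y i + 1" using py[of i] by simp
    moreover have "0 \<le> (n - 1) * y i" "(n - 1) * y i \<le> n - 1" using y01[of i] n2 by (auto simp: mult_left_le)
    ultimately have "0 \<le> n * p i" "n * p i \<le> n" by auto
    thus ?thesis using n2 by (auto simp: zero_le_mult_iff mult_le_cancel_left1)
  qed
  obtain k where k: "m = Suc k" using m2 by (cases m) auto
  define S where "S = 1 - n * (\<Prod>i\<in>{1..m}. p i) + (n - 1) * (\<Prod>i\<in>{1..m}. y i)"
  define Q where "Q = (\<Prod>i\<in>{1..m}. y i)"
  define R where "R = (\<Prod>i\<in>{2..m}. p i)"
  have st: "(1 - p 1) * (1 - R) \<le> S" "S \<le> (1 - Q) * (1 - R)"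
    using S_step[of n y p k] n2 py y01 unfolding S_def Q_def R_def k by auto
  have Rp2: "R \<le> p 2" unfolding R_def using p01 m2 by (intro prod_le_factor) auto
  have lo: "(1 - p 1) * (1 - p 2) \<le> S"
  proof -
    have "(1 - p 1) * (1 - p 2) \<le> (1 - p 1) * (1 - R)" using Rp2 p01[of 1] by (intro mult_left_mono) auto
    thus ?thesis using st by linarith
  qed
  have yp: "1 - y i \<le> 2 * (1 - p i)" for i
  proof -
    have "(n - 1) * (1 - y i) = n * (1 - p i)" using py[of i] by (simp add: algebra_simps)
    also have "\<dots> \<le> (2 * (n - 1)) * (1 - p i)" using n2 p01[of i] by (intro mult_right_mono) auto
    also have "\<dots> = (n - 1) * (2 * (1 - p i))" by (simp add: algebra_simps)
    finally show ?thesis using n2 by simp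
  qed
  have Qb: "1 - Q \<le> real m * (2 * (1 - p 1))"
  proof -
    have "1 - Q \<le> (\<Sum>i\<in>{1..m}. 1 - y i)" unfolding Q_def using y01 by (intro one_minus_prod) auto
    also have "\<dots> \<le> (\<Sum>i\<in>{1..m}. 2 * (1 - p 1))"
    proof (rule sum_mono)
      fix i assume "i \<in> {1..m}"
      thus "1 - y i \<le> 2 * (1 - p 1)" using yp[of i] o1 by force
    qed
    finally show ?thesis by simp
  qed
  have Rb: "1 - R \<le> real m * (1 - p 2)"
  proof -
    have "1 - R \<le> (\<Sum>i\<in>{2..m}. 1 - p i)" unfolding R_def using p01 by (intro one_minus_prod) auto
    also have "\<dots> \<le> (\<Sum>i\<in>{2..m}. 1 - p 2)" using o2 by (intro sum_mono) auto
    also have "\<dots> = real (m - 1) * (1 - p 2)" by simp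
    also have "\<dots> \<le> real m * (1 - p 2)" using p01[of 2] by (intro mult_right_mono) auto
    finally show ?thesis .
  qed
  have Q1: "Q \<le> 1" unfolding Q_def using prod_01[of "{1..m}" y] y01 by auto
  have R1: "R \<le> 1" unfolding R_def using prod_01[of "{2..m}" p] p01 by auto
  have "(1 - Q) * (1 - R) \<le> (real m * (2 * (1 - p 1))) * (real m * (1 - p 2))"
    using Qb Rb Q1 R1 p01[of 1] by (intro mult_mono) auto
  also have "\<dots> = 2 * real m ^ 2 * ((1 - p 1) * (1 - p 2))" by (simp add: power2_eq_square algebra_simps)
  finally show ?thesis using lo st unfolding S_def by linarith
qed




locale cm =
  fixes n m :: nat and a :: "nat \<Rightarrow> nat"
  assumes m1: "m \<ge> 1" and a1: "\<And>i. i \<in> {1..m} \<Longrightarrow> 1 \<le> a i \<and> a i \<le> n"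
begin

definition D where "D i = pmf_of_set (U n (a i))"
definition M where "M = coupon_model n m a"

lemma M_eq: "M = Pi_pmf {1..m} {} D"
  unfolding M_def coupon_model_def D_def U_def ..

lemma setD: "i \<in> {1..m} \<Longrightarrow> set_pmf (D i) = U n (a i)"
  unfolding D_def using a1 U_ne U_finite by (intro set_pmf_of_set) auto

lemma finD: "i \<in> {1..m} \<Longrightarrow> finite (set_pmf (D i))"
  using setD U_finite by simp

lemma finM: "finite (set_pmf M)"
  unfolding M_eq by (simp add: set_Pi_pmf) (intro finite_PiE_dflt, auto simp: finD)

lemma supp: "f \<in> set_pmf M \<Longrightarrow> i \<in> {1..m} \<Longrightarrow> f i \<in> U n (a i)"
  unfolding M_eq by (auto simp: set_Pi_pmf PiE_dflt_def setD)

lemma ind_prod: "(\<Prod>i\<in>I. (if P i then 1 else 0 :: real)) = (if (\<forall>i\<in>I. P i) then 1 else 0)"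
  if "finite I" for I P
  using that by (induction I rule: finite_induct) auto

lemma X_rep:
  assumes "f \<in> set_pmf M"
  shows "X_all m f = (\<Sum>j<n. \<Prod>i\<in>{1..m}. (if j \<in> f i then 1 else 0))"
proof -
  have sub: "(\<Inter>i\<in>{1..m}. f i) \<subseteq> {..<n}"
    using supp[OF assms, of 1] m1 by (auto simp: U_def)
  have "(\<Sum>j<n. \<Prod>i\<in>{1..m}. (if j \<in> f i then 1 else 0 :: real)) = (\<Sum>j<n. if j \<in> (\<Inter>i\<in>{1..m}. f i) then 1 else 0)"
    by (intro sum.cong refl) (simp add: ind_prod)
  also have "\<dots> = real (card {j\<in>{..<n}. j \<in> (\<Inter>i\<in>{1..m}. f i)})"
    by (rule sum_ind_card) simp
  also have "{j\<in>{..<n}. j \<in> (\<Inter>i\<in>{1..m}. f i)} = (\<Inter>i\<in>{1..m}. f i)" using sub by blast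
  finally show ?thesis unfolding X_all_def by simp
qed

lemma X2_rep:
  assumes "f \<in> set_pmf M"
  shows "(X_all m f)^2 = (\<Sum>j<n. \<Sum>l<n. \<Prod>i\<in>{1..m}. (if j \<in> f i \<and> l \<in> f i then 1 else 0))"
proof -
  have "(X_all m f)^2 = (\<Sum>j<n. \<Prod>i\<in>{1..m}. (if j \<in> f i then 1 else 0 :: real)) * (\<Sum>l<n. \<Prod>i\<in>{1..m}. (if l \<in> f i then 1 else 0 :: real))"
    using X_rep[OF assms] by (simp add: power2_eq_square)
  also have "\<dots> = (\<Sum>j<n. \<Sum>l<n. (\<Prod>i\<in>{1..m}. (if j \<in> f i then 1 else 0 :: real)) * (\<Prod>i\<in>{1..m}. (if l \<in> f i then 1 else 0 :: real)))"
    by (simp add: sum_product)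
  also have "\<dots> = (\<Sum>j<n. \<Sum>l<n. \<Prod>i\<in>{1..m}. (if j \<in> f i \<and> l \<in> f i then 1 else 0))"
    by (intro sum.cong refl, subst prod.distrib[symmetric], intro prod.cong refl) auto
  finally show ?thesis .
qed

definition P where "P = (\<Prod>i\<in>{1..m}. real (a i) / real n)"
definition Q where "Q = (\<Prod>i\<in>{1..m}. (real (a i) - 1) / (real n - 1))"

lemma Eprod1:
  assumes "j < n"
  shows "measure_pmf.expectation M (\<lambda>f. \<Prod>i\<in>{1..m}. (if j \<in> f i then 1 else 0)) = P"
proof -
  have "measure_pmf.expectation M (\<lambda>f. \<Prod>i\<in>{1..m}. (if j \<in> f i then 1 else 0))
     = (\<Prod>i\<in>{1..m}. measure_pmf.expectation (D i) (\<lambda>S. if j \<in> S then 1 else 0::real))"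
    unfolding M_eq
    by (subst expectation_prod_Pi_pmf) (auto intro!: integrable_measure_pmf_finite finD)
  also have "\<dots> = P" unfolding P_def D_def using a1 assms by (intro prod.cong refl exp1) auto
  finally show ?thesis .
qed

lemma Eprod2:
  assumes "j < n" "l < n" "j \<noteq> l"
  shows "measure_pmf.expectation M (\<lambda>f. \<Prod>i\<in>{1..m}. (if j \<in> f i \<and> l \<in> f i then 1 else 0)) = P * Q"
proof -
  have "measure_pmf.expectation M (\<lambda>f. \<Prod>i\<in>{1..m}. (if j \<in> f i \<and> l \<in> f i then 1 else 0))
     = (\<Prod>i\<in>{1..m}. measure_pmf.expectation (D i) (\<lambda>S. if j \<in> S \<and> l \<in> S then 1 else 0::real))"
    unfolding M_eq
    by (subst expectation_prod_Pi_pmf) (auto intro!: integrable_measure_pmf_finite finD)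
  also have "\<dots> = (\<Prod>i\<in>{1..m}. real (a i) / real n * ((real (a i) - 1) / (real n - 1)))"
    unfolding D_def using a1 assms by (intro prod.cong refl) (simp add: exp2)
  also have "\<dots> = P * Q" unfolding P_def Q_def by (simp add: prod.distrib[symmetric])
  finally show ?thesis .
qed

lemma EX: "measure_pmf.expectation M (X_all m) = real n * P"
proof -
  have "measure_pmf.expectation M (X_all m) = measure_pmf.expectation M (\<lambda>f. \<Sum>j<n. \<Prod>i\<in>{1..m}. (if j \<in> f i then 1 else 0))"
    by (intro integral_cong_AE AE_pmfI) (auto simp: X_rep)
  also have "\<dots> = (\<Sum>j<n. measure_pmf.expectation M (\<lambda>f. \<Prod>i\<in>{1..m}. (if j \<in> f i then 1 else 0)))"
    by (intro Bochner_Integration.integral_sum integrable_measure_pmf_finite finM)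
  also have "\<dots> = (\<Sum>j<n. P)" by (intro sum.cong refl Eprod1) auto
  finally show ?thesis by simp
qed

lemma EX2: "measure_pmf.expectation M (\<lambda>f. (X_all m f)^2) = real n * P + real n * (real n - 1) * (P * Q)"
proof -
  have "measure_pmf.expectation M (\<lambda>f. (X_all m f)^2) = measure_pmf.expectation M (\<lambda>f. \<Sum>j<n. \<Sum>l<n. \<Prod>i\<in>{1..m}. (if j \<in> f i \<and> l \<in> f i then 1 else 0))"
    by (intro integral_cong_AE AE_pmfI) (auto simp: X2_rep)
  also have "\<dots> = (\<Sum>j<n. \<Sum>l<n. measure_pmf.expectation M (\<lambda>f. \<Prod>i\<in>{1..m}. (if j \<in> f i \<and> l \<in> f i then 1 else 0)))"
    by (simp add: Bochner_Integration.integral_sum integrable_measure_pmf_finite finM)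
  also have "\<dots> = (\<Sum>j<n. P + real (n - 1) * (P * Q))"
  proof (intro sum.cong refl)
    fix j assume j: "j \<in> {..<n}"
    have "(\<Sum>l<n. measure_pmf.expectation M (\<lambda>f. \<Prod>i\<in>{1..m}. (if j \<in> f i \<and> l \<in> f i then 1 else 0)))
       = measure_pmf.expectation M (\<lambda>f. \<Prod>i\<in>{1..m}. (if j \<in> f i \<and> j \<in> f i then 1 else 0))
         + (\<Sum>l\<in>{..<n} - {j}. measure_pmf.expectation M (\<lambda>f. \<Prod>i\<in>{1..m}. (if j \<in> f i \<and> l \<in> f i then 1 else 0)))"
      using j by (simp add: sum.remove)
    also have "\<dots> = P + (\<Sum>l\<in>{..<n} - {j}. P * Q)"
      using j Eprod1[of j] by (intro arg_cong2[where f="(+)"] sum.cong refl Eprod2) auto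
    also have "\<dots> = P + real (n - 1) * (P * Q)" using j by simp
    finally show "(\<Sum>l<n. measure_pmf.expectation M (\<lambda>f. \<Prod>i\<in>{1..m}. (if j \<in> f i \<and> l \<in> f i then 1 else 0)))
       = P + real (n - 1) * (P * Q)" .
  qed
  also have "\<dots> = real n * P + real n * (real n - 1) * (P * Q)"
  proof -
    have "n \<ge> 1" using a1[of 1] m1 by auto
    thus ?thesis by (simp add: of_nat_diff algebra_simps)
  qed
  finally show ?thesis .
qed

lemma Var: "measure_pmf.variance M (X_all m) = real n * P * (1 - real n * P + (real n - 1) * Q)"
proof -
  have "measure_pmf.variance M (X_all m) = measure_pmf.expectation M (\<lambda>f. (X_all m f)^2) - (measure_pmf.expectation M (X_all m))^2"
    by (intro measure_pmf.variance_eq integrable_measure_pmf_finite finM)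
  also have "\<dots> = real n * P * (1 - real n * P + (real n - 1) * Q)"
    unfolding EX EX2 by (simp add: power2_eq_square algebra_simps)
  finally show ?thesis .
qed

end



lemma chain_mono:
  fixes a :: "nat \<Rightarrow> nat"
  assumes ch: "\<forall>i\<in>{1..<m}. a i \<le> a (Suc i)" and j: "1 \<le> j" "j \<le> i" "i \<le> m"
  shows "a j \<le> a i"
  using j(2,3)
proof (induction i rule: dec_induct)
  case base then show ?case by simp
next
  case (step k)
  hence "a k \<le> a (Suc k)" using ch j(1) by auto
  with step show ?case by simp
qed

lemma per_k:
  fixes n m :: nat and a :: "nat \<Rightarrow> nat"
  assumes m2: "m \<ge> 2" and h: "1 \<le> a 1" "a m \<le> n - 1" "\<forall>i\<in>{1..<m}. a i \<le> a (Suc i)"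
  defines "R \<equiv> real (n - a 1) * real (n - a 2) / real n * (\<Prod>i\<in>{1..m}. real (a i) / real n)"
  shows "1 \<le> measure_pmf.variance (coupon_model n m a) (X_all m) / R
    \<and> measure_pmf.variance (coupon_model n m a) (X_all m) / R \<le> 2 * real m ^ 2
    \<and> R = (1 - real (a 1) / real n) * (1 - real (a 2) / real n) * measure_pmf.expectation (coupon_model n m a) (X_all m)"
proof -
  have ai: "a 1 \<le> a i \<and> a i \<le> a m" if "i \<in> {1..m}" for i
    using chain_mono[OF h(3)] that m2 by auto
  have a2i: "a 2 \<le> a i" if "i \<in> {2..m}" for i
    using chain_mono[OF h(3)] that m2 by auto
  have n2: "n \<ge> 2" using h ai[of m] m2 by auto
  have ai1: "1 \<le> a i \<and> a i \<le> n - 1" if "i \<in> {1..m}" for i using ai[OF that] h by auto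
  have ai2: "1 \<le> a i \<and> a i \<le> n" if "i \<in> {1..m}" for i using ai1[OF that] by linarith
  interpret cm n m a using m2 ai2 by unfold_locales auto
  define p where "p i = (if i \<in> {1..m} then real (a i) / real n else 1)" for i
  define y where "y i = (if i \<in> {1..m} then (real (a i) - 1) / (real n - 1) else 1)" for i
  have rn: "real n \<ge> 2" using n2 by simp
  have py: "(real n - 1) * y i = real n * p i - 1" for i
    using rn unfolding p_def y_def by auto
  have y01: "0 \<le> y i \<and> y i \<le> 1" for i
  proof (cases "i \<in> {1..m}")
    case True
    have "1 \<le> real (a i)" "real (a i) \<le> real n - 1" using ai1[OF True] n2 by auto
    thus ?thesis using True rn unfolding y_def by auto
  qed (auto simp: y_def)
  have o1: "p 1 \<le> p i" if "i \<in> {1..m}" for i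
    using ai[OF that] that m2 rn unfolding p_def by (auto intro: divide_right_mono)
  have o2: "p 2 \<le> p i" if "i \<in> {2..m}" for i
    using a2i[OF that] that m2 rn unfolding p_def by (auto intro: divide_right_mono)
  have Pp: "P = (\<Prod>i\<in>{1..m}. p i)" unfolding P_def p_def by (intro prod.cong) auto
  have Qy: "Q = (\<Prod>i\<in>{1..m}. y i)" unfolding Q_def y_def by (intro prod.cong) auto
  define S where "S = 1 - real n * P + (real n - 1) * Q"
  define x12 where "x12 = (1 - p 1) * (1 - p 2)"
  have bnd: "x12 \<le> S \<and> S \<le> 2 * real m ^ 2 * x12"
    using S_final[of "real n" y p m] rn py y01 m2 o1 o2 unfolding S_def x12_def Pp Qy by auto
  have p1: "p 1 = real (a 1) / real n" "p 2 = real (a 2) / real n" using m2 unfolding p_def by auto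
  have x1pos: "1 - p 1 > 0" "1 - p 2 > 0"
  proof -
    have "real (a 1) < real n" "real (a 2) < real n" using ai1[of 1] ai1[of 2] m2 n2 by auto
    thus "1 - p 1 > 0" "1 - p 2 > 0" unfolding p1 using rn by auto
  qed
  have x12pos: "x12 > 0" unfolding x12_def using x1pos by simp
  have Ppos: "P > 0" unfolding P_def using ai2 rn by (intro prod_pos) (force intro!: divide_pos_pos)
  have Rform: "R = real n * P * x12"
  proof -
    have "real (n - a 1) = real n * (1 - p 1)" "real (n - a 2) = real n * (1 - p 2)"
      using ai1[of 1] ai1[of 2] m2 rn unfolding p1 by (auto simp: of_nat_diff field_simps)
    thus ?thesis unfolding R_def x12_def P_def[symmetric] using rn by simp
  qed
  have V: "measure_pmf.variance (coupon_model n m a) (X_all m) = real n * P * S"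
    using Var unfolding M_def S_def by simp
  have ratio: "measure_pmf.variance (coupon_model n m a) (X_all m) / R = S / x12"
    unfolding V Rform using rn Ppos by simp
  have "1 \<le> S / x12" using bnd x12pos by simp
  moreover have "S / x12 \<le> 2 * real m ^ 2" using bnd x12pos by (simp add: divide_le_eq)
  moreover have "R = (1 - real (a 1) / real n) * (1 - real (a 2) / real n) * measure_pmf.expectation (coupon_model n m a) (X_all m)"
    using EX unfolding M_def Rform x12_def p1 by simp
  ultimately show ?thesis unfolding ratio by simp
qed




theorem theorem2:
  fixes m :: nat and N :: "nat \<Rightarrow> nat" and a :: "nat \<Rightarrow> nat \<Rightarrow> nat"
  assumes m2: "m \<ge> 2"
    and A1: "filterlim N at_top sequentially"
    and A2: "\<And>i. i \<in> {1..m} \<Longrightarrow>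
               filterlim (\<lambda>k. a k i) at_top sequentially \<and>
               filterlim (\<lambda>k. N k - a k i) at_top sequentially"
    and A3: "\<And>k. 1 \<le> a k 1 \<and> a k m \<le> N k - 1 \<and> (\<forall>i\<in>{1..<m}. a k i \<le> a k (Suc i))"
    and A4: "\<And>i. i \<in> {1..m} \<Longrightarrow>
               \<exists>\<alpha>\<in>{0..1}. (\<lambda>k. real (a k i) / real (N k)) \<longlonglongrightarrow> \<alpha>"
  shows "asymp_order
           (\<lambda>k. measure_pmf.variance (coupon_model (N k) m (a k)) (X_all m))
           (\<lambda>k. real (N k - a k 1) * real (N k - a k 2) / real (N k) *
                (\<Prod>i\<in>{1..m}. real (a k i) / real (N k)))
       \<and> (\<forall>k. real (N k - a k 1) * real (N k - a k 2) / real (N k) *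
                (\<Prod>i\<in>{1..m}. real (a k i) / real (N k))
              = (1 - real (a k 1) / real (N k)) * (1 - real (a k 2) / real (N k)) *
                measure_pmf.expectation (coupon_model (N k) m (a k)) (X_all m))"
proof -
  define V where "V k = measure_pmf.variance (coupon_model (N k) m (a k)) (X_all m)" for k
  define R where "R k = real (N k - a k 1) * real (N k - a k 2) / real (N k) *
                (\<Prod>i\<in>{1..m}. real (a k i) / real (N k))" for k
  have pk: "1 \<le> V k / R k \<and> V k / R k \<le> 2 * real m ^ 2 \<and>
      R k = (1 - real (a k 1) / real (N k)) * (1 - real (a k 2) / real (N k)) *
                measure_pmf.expectation (coupon_model (N k) m (a k)) (X_all m)" for k
    unfolding V_def R_def using per_k[OF m2, of "a k" "N k"] A3[of k] by blast
  have ls: "limsup (\<lambda>k. ereal (V k / R k)) \<le> ereal (2 * real m ^ 2)"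
  proof -
    have u: "ereal (V k / R k) \<le> ereal (2 * real m ^ 2)" for k
    proof -
      have "V k / R k \<le> 2 * real m ^ 2" using pk[of k] by blast
      thus ?thesis by simp
    qed
    show ?thesis by (intro Limsup_bounded always_eventually allI u)
  qed
  have li: "ereal 1 \<le> liminf (\<lambda>k. ereal (V k / R k))"
  proof -
    have u: "ereal 1 \<le> ereal (V k / R k)" for k
    proof -
      have "1 \<le> V k / R k" using pk[of k] by blast
      thus ?thesis by simp
    qed
    show ?thesis by (intro Liminf_bounded always_eventually allI u)
  qed
  have ll: "liminf (\<lambda>k. ereal (V k / R k)) \<le> limsup (\<lambda>k. ereal (V k / R k))"
    by (rule Liminf_le_Limsup) simp
  have "asymp_order V R"
    unfolding asymp_order_def
  proof (intro conjI)
    show "0 < liminf (\<lambda>k. ereal (V k / R k))" 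
    proof -
      have "(0::ereal) < ereal 1" by simp
      thus ?thesis using li by (rule order_less_le_trans)
    qed
    thus "0 < limsup (\<lambda>k. ereal (V k / R k))" using ll by (rule order_less_le_trans)
    show "limsup (\<lambda>k. ereal (V k / R k)) < \<infinity>" 
    proof -
      have "ereal (2 * real m ^ 2) < \<infinity>" by simp
      with ls show ?thesis by (rule order_le_less_trans)
    qed
    thus "liminf (\<lambda>k. ereal (V k / R k)) < \<infinity>" using ll by (rule le_less_trans[rotated])
  qed
  thus ?thesis using pk unfolding V_def R_def by blast
qed


end
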